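(* Let $(X,\tau_\delta)_{\delta>0}$ be a Hilbert dilation system, $\mathcal E\subseteq X$ an ellipsoid, $\epsilon\in(0,1/2)$, $I\subseteq(0,\infty)$ a compact interval, and suppose $\tau_\delta\mathcal E$ is $\epsilon$-degenerate for every $\delta\in I$. Then there is a subspace $H\subseteq X$ such that for all $\delta\in I$: (a) $\tau_\delta\mathcal E\subseteq\tau_\delta H+\epsilon\mathcal B$, and (b) $\tau_\delta H\cap\frac{1}{2\epsilon}\mathcal B\subseteq\tau_\delta\mathcal E$.
   Context: Hilbert dilation system: $X$ a real Hilbert space of finite dimension $d$, $X=\bigoplus_{\nu=1}^mX_\nu$ orthogonal, $\tau_\delta|_{X_\nu}=\delta^{-\nu}\mathrm{id}$. $\mathcal B$ is the closed unit ball of $X$. A (centered) ellipsoid is a set $\{\sum_{i=1}^dc_i\sigma_iv_i:\sum c_i^2\le1\}$ with $\sigma_1\ge\dots\ge\sigma_d\ge0$ (principal axis lengths) and $\{v_i\}$ an orthonormal basis. An ellipsoid is $\epsilon$-degenerate if none of its principal axis lengths lies in $[\epsilon,\epsilon^{-1}]$. *)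

theory Defs
  imports "HOL-Analysis.Analysis"
begin

definition hilbert_dilation_system ::
  "nat \<Rightarrow> (nat \<Rightarrow> 'a::euclidean_space set) \<Rightarrow> (real \<Rightarrow> 'a \<Rightarrow> 'a) \<Rightarrow> bool" where
  "hilbert_dilation_system m Xs tau \<longleftrightarrow>
     (\<forall>nu\<in>{1..m}. subspace (Xs nu)) \<and>
     (\<forall>nu\<in>{1..m}. \<forall>mu\<in>{1..m}. nu \<noteq> mu \<longrightarrow>
         (\<forall>x\<in>Xs nu. \<forall>y\<in>Xs mu. x \<bullet> y = 0)) \<and>
     span (\<Union>nu\<in>{1..m}. Xs nu) = UNIV \<and>
     (\<forall>delta>0. linear (tau delta) \<and>
        (\<forall>nu\<in>{1..m}. \<forall>x\<in>Xs nu. tau delta x = (delta powi (- int nu)) *\<^sub>R x))"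

text \<open>E is the ellipsoid with principal axis lengths sg 0 \<ge> ... \<ge> sg (d-1) \<ge> 0
  along the orthonormal basis v 0, ..., v (d-1), where d = DIM('a).\<close>
definition ellipsoid_rep :: "'a::euclidean_space set \<Rightarrow> (nat \<Rightarrow> real) \<Rightarrow> (nat \<Rightarrow> 'a) \<Rightarrow> bool" where
  "ellipsoid_rep E sg v \<longleftrightarrow>
     (\<forall>i<DIM('a). norm (v i) = 1) \<and>
     (\<forall>i<DIM('a). \<forall>j<DIM('a). i \<noteq> j \<longrightarrow> v i \<bullet> v j = 0) \<and>
     (\<forall>i<DIM('a). 0 \<le> sg i) \<and>
     (\<forall>i<DIM('a). \<forall>j<DIM('a). i \<le> j \<longrightarrow> sg j \<le> sg i) \<and>
     E = {(\<Sum>i<DIM('a). (c i * sg i) *\<^sub>R v i) | c. (\<Sum>i<DIM('a). (c i)\<^sup>2) \<le> 1}"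

definition ellipsoid :: "'a::euclidean_space set \<Rightarrow> bool" where
  "ellipsoid E \<longleftrightarrow> (\<exists>sg v. ellipsoid_rep E sg v)"

definition eps_degenerate :: "real \<Rightarrow> 'a::euclidean_space set \<Rightarrow> bool" where
  "eps_degenerate eps E \<longleftrightarrow>
     (\<exists>sg v. ellipsoid_rep E sg v \<and> (\<forall>i<DIM('a). sg i \<notin> {eps..1/eps}))"

end

theory Submission imports Defs begin

lemma hds_decomp:
  assumes "hilbert_dilation_system m Xs tau"
  shows "\<exists>f. (\<forall>nu\<in>{1..m}. f nu \<in> Xs nu) \<and> x = (\<Sum>nu=1..m. f nu)"
proof -
  let ?S = "{y. \<exists>f. (\<forall>nu\<in>{1..m}. f nu \<in> Xs nu) \<and> y = (\<Sum>nu=1..m. f nu)}"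
  have sub: "\<forall>nu\<in>{1..m}. subspace (Xs nu)" using assms unfolding hilbert_dilation_system_def by blast
  have "subspace ?S"
    unfolding subspace_def
  proof (intro conjI ballI allI)
    show "0 \<in> ?S" using sub by (auto intro!: exI[of _ "\<lambda>_. 0"] simp: subspace_0)
  next
    fix x y assume "x \<in> ?S" "y \<in> ?S"
    then obtain f g where f: "\<forall>nu\<in>{1..m}. f nu \<in> Xs nu" "x = (\<Sum>nu=1..m. f nu)"
      and g: "\<forall>nu\<in>{1..m}. g nu \<in> Xs nu" "y = (\<Sum>nu=1..m. g nu)" by blast
    show "x + y \<in> ?S"
      by (rule CollectI, rule exI[of _ "\<lambda>nu. f nu + g nu"])
        (use f g sub in \<open>auto simp: sum.distrib subspace_add\<close>)
  next
    fix c and x assume "x \<in> ?S"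
    then obtain f where f: "\<forall>nu\<in>{1..m}. f nu \<in> Xs nu" "x = (\<Sum>nu=1..m. f nu)" by blast
    show "c *\<^sub>R x \<in> ?S"
      by (rule CollectI, rule exI[of _ "\<lambda>nu. c *\<^sub>R f nu"])
        (use f sub in \<open>auto simp: scaleR_sum_right subspace_scale\<close>)
  qed
  moreover have "(\<Union>nu\<in>{1..m}. Xs nu) \<subseteq> ?S"
  proof
    fix y assume "y \<in> (\<Union>nu\<in>{1..m}. Xs nu)"
    then obtain mu where mu: "mu \<in> {1..m}" "y \<in> Xs mu" by blast
    show "y \<in> ?S"
      by (rule CollectI, rule exI[of _ "\<lambda>nu. if nu = mu then y else 0"])
        (use mu sub in \<open>auto simp: subspace_0\<close>)
  qed
  ultimately have "span (\<Union>nu\<in>{1..m}. Xs nu) \<subseteq> ?S" by (rule span_minimal[rotated])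
  moreover have "span (\<Union>nu\<in>{1..m}. Xs nu) = UNIV" using assms unfolding hilbert_dilation_system_def by blast
  ultimately show ?thesis by blast
qed

lemma hds_norm_sum:
  assumes "hilbert_dilation_system m Xs tau" "\<forall>nu\<in>{1..m}. f nu \<in> Xs nu"
  shows "(norm (\<Sum>nu=1..m. g nu *\<^sub>R f nu))\<^sup>2 = (\<Sum>nu=1..m. (g nu)\<^sup>2 * (norm (f nu))\<^sup>2)"
proof -
  have orth: "\<forall>nu\<in>{1..m}. \<forall>mu\<in>{1..m}. nu \<noteq> mu \<longrightarrow> (\<forall>x\<in>Xs nu. \<forall>y\<in>Xs mu. x \<bullet> y = 0)"
    using assms(1) unfolding hilbert_dilation_system_def by blast
  have "(norm (\<Sum>nu=1..m. g nu *\<^sub>R f nu))\<^sup>2 = (\<Sum>nu=1..m. (norm (g nu *\<^sub>R f nu))\<^sup>2)"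
    by (rule norm_sum_Pythagorean) (use orth assms(2) in \<open>auto simp: pairwise_def orthogonal_def\<close>)
  also have "\<dots> = (\<Sum>nu=1..m. (g nu)\<^sup>2 * (norm (f nu))\<^sup>2)"
    by (simp add: power_mult_distrib)
  finally show ?thesis .
qed

lemma hds_tau_sum:
  assumes "hilbert_dilation_system m Xs tau" "\<forall>nu\<in>{1..m}. f nu \<in> Xs nu" "0 < delta"
  shows "tau delta (\<Sum>nu=1..m. f nu) = (\<Sum>nu=1..m. inverse (delta ^ nu) *\<^sub>R f nu)"
proof -
  have lin: "linear (tau delta)" and ev: "\<forall>nu\<in>{1..m}. \<forall>x\<in>Xs nu. tau delta x = (delta powi (- int nu)) *\<^sub>R x"
    using assms(1,3) unfolding hilbert_dilation_system_def by blast+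
  have "tau delta (\<Sum>nu=1..m. f nu) = (\<Sum>nu=1..m. tau delta (f nu))"
    by (rule linear_sum[OF lin])
  also have "\<dots> = (\<Sum>nu=1..m. inverse (delta ^ nu) *\<^sub>R f nu)"
    by (rule sum.cong) (use ev assms(2) in \<open>auto simp: power_int_minus\<close>)
  finally show ?thesis .
qed

lemma hds_tau_comp:
  assumes "hilbert_dilation_system m Xs tau" "0 < delta" "0 < gamma"
  shows "tau delta (tau gamma x) = tau (delta * gamma) x"
proof -
  obtain f where f: "\<forall>nu\<in>{1..m}. f nu \<in> Xs nu" "x = (\<Sum>nu=1..m. f nu)"
    using hds_decomp[OF assms(1)] by blast
  have sub: "\<forall>nu\<in>{1..m}. subspace (Xs nu)" using assms(1) unfolding hilbert_dilation_system_def by blast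
  have f2: "\<forall>nu\<in>{1..m}. inverse (gamma ^ nu) *\<^sub>R f nu \<in> Xs nu"
    using f(1) sub by (simp add: subspace_scale)
  have "tau delta (tau gamma x) = tau delta (\<Sum>nu=1..m. inverse (gamma ^ nu) *\<^sub>R f nu)"
    using hds_tau_sum[OF assms(1) f(1) assms(3)] f(2) by simp
  also have "\<dots> = (\<Sum>nu=1..m. inverse (delta ^ nu) *\<^sub>R inverse (gamma ^ nu) *\<^sub>R f nu)"
    using hds_tau_sum[OF assms(1) f2 assms(2)] .
  also have "\<dots> = (\<Sum>nu=1..m. inverse ((delta * gamma) ^ nu) *\<^sub>R f nu)"
    by (simp add: power_mult_distrib mult.commute)
  also have "\<dots> = tau (delta * gamma) x"
    using hds_tau_sum[OF assms(1) f(1)] f(2) assms(2,3) by simp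
  finally show ?thesis .
qed

lemma hds_tau_1:
  assumes "hilbert_dilation_system m Xs tau"
  shows "tau 1 x = x"
proof -
  obtain f where f: "\<forall>nu\<in>{1..m}. f nu \<in> Xs nu" "x = (\<Sum>nu=1..m. f nu)"
    using hds_decomp[OF assms(1)] by blast
  show ?thesis using hds_tau_sum[OF assms(1) f(1)] f(2) by simp
qed

lemma hds_tau_linear:
  assumes "hilbert_dilation_system m Xs tau" "0 < delta"
  shows "linear (tau delta)"
  using assms unfolding hilbert_dilation_system_def by blast

lemma hds_tau_inj:
  assumes "hilbert_dilation_system m Xs tau" "0 < delta" "tau delta x = tau delta y"
  shows "x = y"
proof -
  have "tau (1/delta) (tau delta x) = tau (1/delta) (tau delta y)" using assms(3) by simp
  then show ?thesis using hds_tau_comp[OF assms(1), of "1/delta" delta] hds_tau_1[OF assms(1)] assms(2)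
    by simp
qed

lemma hds_tau_norm_le1:
  assumes "hilbert_dilation_system m Xs tau" "1 \<le> delta"
  shows "norm (tau delta x) \<le> norm x"
proof -
  obtain f where f: "\<forall>nu\<in>{1..m}. f nu \<in> Xs nu" "x = (\<Sum>nu=1..m. f nu)"
    using hds_decomp[OF assms(1)] by blast
  have "(norm (tau delta x))\<^sup>2 = (norm (\<Sum>nu=1..m. inverse (delta ^ nu) *\<^sub>R f nu))\<^sup>2"
    using hds_tau_sum[OF assms(1) f(1)] f(2) assms(2) by simp
  also have "\<dots> = (\<Sum>nu=1..m. (inverse (delta ^ nu))\<^sup>2 * (norm (f nu))\<^sup>2)"
    by (rule hds_norm_sum[OF assms(1) f(1)])
  also have "\<dots> \<le> (\<Sum>nu=1..m. 1\<^sup>2 * (norm (f nu))\<^sup>2)"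
  proof (rule sum_mono)
    fix nu assume "nu \<in> {1..m}"
    have "0 \<le> inverse (delta ^ nu)" using assms(2) by simp
    moreover have "inverse (delta ^ nu) \<le> 1" using assms(2) by (simp add: one_le_power inverse_le_1_iff)
    ultimately have "(inverse (delta ^ nu))\<^sup>2 \<le> 1\<^sup>2" by (rule power_mono[rotated])
    then show "(inverse (delta ^ nu))\<^sup>2 * (norm (f nu))\<^sup>2 \<le> 1\<^sup>2 * (norm (f nu))\<^sup>2"
      by (rule mult_right_mono) simp
  qed
  also have "\<dots> = (norm (\<Sum>nu=1..m. (1::real) *\<^sub>R f nu))\<^sup>2"
    by (rule hds_norm_sum[OF assms(1) f(1), symmetric])
  also have "\<dots> = (norm x)\<^sup>2" using f(2) by simp
  finally show ?thesis by (simp add: power2_le_iff_abs_le)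
qed

lemma hds_tau_norm_ge1:
  assumes "hilbert_dilation_system m Xs tau" "0 < mu" "mu \<le> 1"
  shows "norm (tau mu x) \<le> (inverse mu) ^ m * norm x"
proof -
  obtain f where f: "\<forall>nu\<in>{1..m}. f nu \<in> Xs nu" "x = (\<Sum>nu=1..m. f nu)"
    using hds_decomp[OF assms(1)] by blast
  have "(norm (tau mu x))\<^sup>2 = (norm (\<Sum>nu=1..m. inverse (mu ^ nu) *\<^sub>R f nu))\<^sup>2"
    using hds_tau_sum[OF assms(1) f(1)] f(2) assms(2) by simp
  also have "\<dots> = (\<Sum>nu=1..m. (inverse (mu ^ nu))\<^sup>2 * (norm (f nu))\<^sup>2)"
    by (rule hds_norm_sum[OF assms(1) f(1)])
  also have "\<dots> \<le> (\<Sum>nu=1..m. ((inverse mu) ^ m)\<^sup>2 * (norm (f nu))\<^sup>2)"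
  proof (rule sum_mono)
    fix nu assume nu: "nu \<in> {1..m}"
    have "0 \<le> inverse (mu ^ nu)" using assms(2) by simp
    moreover have "inverse (mu ^ nu) \<le> (inverse mu) ^ m"
      using nu assms(2,3) by (simp add: power_inverse[symmetric] power_increasing one_le_inverse)
    ultimately have "(inverse (mu ^ nu))\<^sup>2 \<le> ((inverse mu) ^ m)\<^sup>2" by (simp add: power_mono)
    then show "(inverse (mu ^ nu))\<^sup>2 * (norm (f nu))\<^sup>2 \<le> ((inverse mu) ^ m)\<^sup>2 * (norm (f nu))\<^sup>2"
      by (rule mult_right_mono) simp
  qed
  also have "\<dots> = (norm (\<Sum>nu=1..m. ((inverse mu) ^ m) *\<^sub>R f nu))\<^sup>2"
    by (rule hds_norm_sum[OF assms(1) f(1), symmetric])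
  also have "\<dots> = ((inverse mu) ^ m * norm x)\<^sup>2" using f(2) assms(2)
    by (simp add: scaleR_sum_right[symmetric] power_mult_distrib)
  finally show ?thesis using assms(2)
    by (simp add: power2_le_iff_abs_le)
qed

lemma rep_inner:
  assumes "ellipsoid_rep (E::'a::euclidean_space set) sg v" "i < DIM('a)" "j < DIM('a)"
  shows "v i \<bullet> v j = (if i = j then 1 else 0)"
  using assms unfolding ellipsoid_rep_def by (auto simp: norm_eq_1)

lemma rep_inj:
  assumes "ellipsoid_rep (E::'a::euclidean_space set) sg v"
  shows "inj_on v {..<DIM('a)}"
proof (rule inj_onI)
  fix i j assume ij: "i \<in> {..<DIM('a)}" "j \<in> {..<DIM('a)}" "v i = v j"
  show "i = j"
  proof (rule ccontr)
    assume "i \<noteq> j"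
    then have "v i \<bullet> v j = 0" using rep_inner[OF assms, of i j] ij by simp
    moreover have "v i \<bullet> v i = 1" using rep_inner[OF assms, of i i] ij by simp
    ultimately show False using ij(3) by simp
  qed
qed

lemma rep_parseval:
  assumes "ellipsoid_rep (E::'a::euclidean_space set) sg v" "I \<subseteq> {..<DIM('a)}"
  shows "(norm (\<Sum>i\<in>I. b i *\<^sub>R v i))\<^sup>2 = (\<Sum>i\<in>I. (b i)\<^sup>2)"
proof -
  have fin: "finite I" using assms(2) finite_subset by blast
  have "(norm (\<Sum>i\<in>I. b i *\<^sub>R v i))\<^sup>2 = (\<Sum>i\<in>I. (norm (b i *\<^sub>R v i))\<^sup>2)"
    by (rule norm_sum_Pythagorean[OF fin])
      (use assms in \<open>auto simp: pairwise_def orthogonal_def ellipsoid_rep_def subset_iff\<close>)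
  also have "\<dots> = (\<Sum>i\<in>I. (b i)\<^sup>2)"
    by (rule sum.cong) (use assms in \<open>auto simp: ellipsoid_rep_def subset_iff\<close>)
  finally show ?thesis .
qed

lemma rep_inner_sum:
  assumes "ellipsoid_rep (E::'a::euclidean_space set) sg v" "I \<subseteq> {..<DIM('a)}" "j < DIM('a)"
  shows "(\<Sum>i\<in>I. b i *\<^sub>R v i) \<bullet> v j = (if j \<in> I then b j else 0)"
proof -
  have fin: "finite I" using assms(2) finite_subset by blast
  have "(\<Sum>i\<in>I. b i *\<^sub>R v i) \<bullet> v j = (\<Sum>i\<in>I. (if i = j then b i else 0))"
    unfolding inner_sum_left
    by (rule sum.cong) (use assms rep_inner[OF assms(1)] in \<open>auto simp: subset_iff\<close>)
  also have "\<dots> = (if j \<in> I then b j else 0)"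
    using fin by (simp add: sum.delta')
  finally show ?thesis .
qed

lemma rep_indep:
  assumes "ellipsoid_rep (E::'a::euclidean_space set) sg v" "I \<subseteq> {..<DIM('a)}"
  shows "independent (v ` I)" "dim (span (v ` I)) = card I"
proof -
  show ind: "independent (v ` I)"
  proof (rule pairwise_orthogonal_independent)
    show "pairwise orthogonal (v ` I)"
      unfolding pairwise_def orthogonal_def
      using assms rep_inner[OF assms(1)] by (auto simp: subset_iff)
    show "0 \<notin> v ` I"
      using assms unfolding ellipsoid_rep_def by (auto simp: subset_iff)
  qed
  have "inj_on v I" using rep_inj[OF assms(1)] assms(2) inj_on_subset by blast
  then show "dim (span (v ` I)) = card I"
    using dim_eq_card_independent[OF ind] by (simp add: card_image)
qed

lemma rep_expand:
  assumes "ellipsoid_rep (E::'a::euclidean_space set) sg v" "I \<subseteq> {..<DIM('a)}" "z \<in> span (v ` I)"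
  shows "z = (\<Sum>i\<in>I. (z \<bullet> v i) *\<^sub>R v i)"
proof -
  have fin: "finite I" using assms(2) finite_subset by blast
  obtain u where u: "z = (\<Sum>w\<in>v ` I. u w *\<^sub>R w)"
    using assms(3) span_finite[of "v ` I"] fin by auto
  have inj: "inj_on v I" using rep_inj[OF assms(1)] assms(2) inj_on_subset by blast
  have z: "z = (\<Sum>i\<in>I. u (v i) *\<^sub>R v i)" using u sum.reindex[OF inj] by simp
  have "z \<bullet> v j = u (v j)" if "j \<in> I" for j
    using rep_inner_sum[OF assms(1,2), of j "\<lambda>i. u (v i)"] that assms(2) z by auto
  then show ?thesis using z by (metis (no_types, lifting) sum.cong)
qed

lemma rep_mem:
  assumes "ellipsoid_rep (E::'a::euclidean_space set) sg v"
  shows "x \<in> E \<longleftrightarrow> (\<exists>c. (\<Sum>i<DIM('a). (c i)\<^sup>2) \<le> 1 \<and> x = (\<Sum>i<DIM('a). (c i * sg i) *\<^sub>R v i))"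
  using assms unfolding ellipsoid_rep_def by blast

lemma dim_inter_nonzero:
  fixes S T :: "'a::euclidean_space set"
  assumes "subspace S" "subspace T" "dim S + dim T > DIM('a)"
  shows "\<exists>x\<in>S \<inter> T. x \<noteq> 0"
proof -
  have "dim {x + y |x y. x \<in> S \<and> y \<in> T} + dim (S \<inter> T) = dim S + dim T"
    by (rule dim_sums_Int[OF assms(1,2)])
  moreover have "dim {x + y |x y. x \<in> S \<and> y \<in> T} \<le> DIM('a)"
    using dim_subset_UNIV[of "{x + y |x y. x \<in> S \<and> y \<in> T}"] by simp
  ultimately have "dim (S \<inter> T) \<noteq> 0" using assms(3) by linarith
  then show ?thesis by auto
qed

lemma dim_orth_comp:
  fixes W :: "'a::euclidean_space set"
  assumes "subspace W"
  shows "dim W + dim (orthogonal_comp W) = DIM('a)"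
proof -
  have "dim {x + y |x y. x \<in> W \<and> y \<in> orthogonal_comp W} + dim (W \<inter> orthogonal_comp W) = dim W + dim (orthogonal_comp W)"
    by (rule dim_sums_Int[OF assms subspace_orthogonal_comp])
  moreover have "{x + y |x y. x \<in> W \<and> y \<in> orthogonal_comp W} = UNIV"
  proof -
    have "z \<in> W + orthogonal_comp W" for z using subspace_sum_orthogonal_comp[OF assms] by simp
    then show ?thesis unfolding set_plus_def by blast
  qed
  moreover have "W \<inter> orthogonal_comp W = {0}" by (rule orthogonal_Int_0[OF assms])
  ultimately show ?thesis by simp
qed

lemma rep_split:
  assumes rep: "ellipsoid_rep (F::'a::euclidean_space set) sg v"
    and dg: "\<forall>i<DIM('a). sg i \<notin> {eps..1/eps}"
    and J: "J = {i. i < DIM('a) \<and> 1/eps < sg i}"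
    and y: "y \<in> F" and eps: "0 < eps"
  shows "\<exists>c w. (\<Sum>i<DIM('a). (c i)\<^sup>2) \<le> 1 \<and> y = (\<Sum>i\<in>J. (c i * sg i) *\<^sub>R v i) + w \<and> norm w \<le> eps"
proof -
  obtain c where c: "(\<Sum>i<DIM('a). (c i)\<^sup>2) \<le> 1" "y = (\<Sum>i<DIM('a). (c i * sg i) *\<^sub>R v i)"
    using rep_mem[OF rep] y by blast
  let ?K = "{..<DIM('a)} - J"
  have JK: "J \<subseteq> {..<DIM('a)}" using J by auto
  have split: "(\<Sum>i<DIM('a). (c i * sg i) *\<^sub>R v i) = (\<Sum>i\<in>J. (c i * sg i) *\<^sub>R v i) + (\<Sum>i\<in>?K. (c i * sg i) *\<^sub>R v i)"
    using sum.subset_diff[OF JK finite_lessThan, of "\<lambda>i. (c i * sg i) *\<^sub>R v i"] by (simp only: add.commute)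
  have sgK: "0 \<le> sg i \<and> sg i < eps" if "i \<in> ?K" for i
  proof -
    have i: "i < DIM('a)" and n1: "\<not> 1/eps < sg i" using that J by auto
    have "0 \<le> sg i" using rep i unfolding ellipsoid_rep_def by blast
    moreover have "sg i \<le> 1/eps" using n1 by (simp only: not_less)
    moreover have "sg i \<notin> {eps..1/eps}" using dg i by blast
    then have "\<not> (eps \<le> sg i \<and> sg i \<le> 1/eps)" by (metis atLeastAtMost_iff)
    ultimately have "0 \<le> sg i" "sg i \<le> 1/eps" "\<not> (eps \<le> sg i \<and> sg i \<le> 1/eps)" by blast+
    then show ?thesis by linarith
  qed
  have "(norm (\<Sum>i\<in>?K. (c i * sg i) *\<^sub>R v i))\<^sup>2 = (\<Sum>i\<in>?K. (c i * sg i)\<^sup>2)"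
    by (rule rep_parseval[OF rep]) auto
  also have "\<dots> \<le> (\<Sum>i\<in>?K. eps\<^sup>2 * (c i)\<^sup>2)"
  proof (rule sum_mono)
    fix i assume "i \<in> ?K"
    then have "(sg i)\<^sup>2 \<le> eps\<^sup>2" using sgK[of i] by (intro power_mono) auto
    then have "(c i)\<^sup>2 * (sg i)\<^sup>2 \<le> (c i)\<^sup>2 * eps\<^sup>2" by (rule mult_left_mono) simp
    then show "(c i * sg i)\<^sup>2 \<le> eps\<^sup>2 * (c i)\<^sup>2"
      by (simp add: power_mult_distrib mult.commute)
  qed
  also have "\<dots> \<le> (\<Sum>i<DIM('a). eps\<^sup>2 * (c i)\<^sup>2)"
    by (rule sum_mono2) simp_all
  also have "\<dots> = eps\<^sup>2 * (\<Sum>i<DIM('a). (c i)\<^sup>2)"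
    by (rule sum_distrib_left[symmetric])
  also have "\<dots> \<le> eps\<^sup>2 * 1"
    by (rule mult_left_mono) (use c(1) in simp_all)
  finally have n2: "(norm (\<Sum>i\<in>?K. (c i * sg i) *\<^sub>R v i))\<^sup>2 \<le> eps\<^sup>2 * 1" .
  have nK: "norm (\<Sum>i\<in>?K. (c i * sg i) *\<^sub>R v i) \<le> eps"
  proof (rule power2_le_imp_le)
    show "(norm (\<Sum>i\<in>?K. (c i * sg i) *\<^sub>R v i))\<^sup>2 \<le> eps\<^sup>2" using n2 by simp
    show "0 \<le> eps" using eps by simp
  qed
  have "y = (\<Sum>i\<in>J. (c i * sg i) *\<^sub>R v i) + (\<Sum>i\<in>?K. (c i * sg i) *\<^sub>R v i)"
    using c(2) split by simp
  with c(1) nK show ?thesis by blast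
qed

lemma rep_long_ball:
  assumes rep: "ellipsoid_rep (F::'a::euclidean_space set) sg v"
    and J: "J = {i. i < DIM('a) \<and> 1/eps < sg i}" and eps: "0 < eps"
    and z: "z \<in> span (v ` J)" "norm z \<le> 1/eps"
  shows "z \<in> F"
proof -
  have JK: "J \<subseteq> {..<DIM('a)}" using J by auto
  have ze: "z = (\<Sum>i\<in>J. (z \<bullet> v i) *\<^sub>R v i)" by (rule rep_expand[OF rep JK z(1)])
  define c where "c i = (if i \<in> J then (z \<bullet> v i) / sg i else 0)" for i
  have sgp: "0 < sg i" "1/eps < sg i" if "i \<in> J" for i
    using that J eps by (auto intro: less_trans[of 0 "1/eps"])
  have sgnz: "sg i \<noteq> 0" if "i \<in> J" for i using sgp(1)[OF that] by simp
  have "(\<Sum>i<DIM('a). (c i)\<^sup>2) = (\<Sum>i\<in>J. ((z \<bullet> v i) / sg i)\<^sup>2)"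
    unfolding c_def by (rule sum.mono_neutral_cong_right) (use JK in auto)
  also have "\<dots> \<le> (\<Sum>i\<in>J. eps\<^sup>2 * (z \<bullet> v i)\<^sup>2)"
  proof (rule sum_mono)
    fix i assume i: "i \<in> J"
    have "1 / sg i \<le> eps" using sgp[OF i] eps by (simp add: field_simps)
    then have "(1 / sg i)\<^sup>2 \<le> eps\<^sup>2" using sgp[OF i] by (intro power_mono) auto
    have "((z \<bullet> v i) / sg i)\<^sup>2 = (z \<bullet> v i)\<^sup>2 * (1 / sg i)\<^sup>2" by (simp add: power_divide)
    also have "\<dots> \<le> (z \<bullet> v i)\<^sup>2 * eps\<^sup>2" by (rule mult_left_mono) (fact, simp)
    finally show "((z \<bullet> v i) / sg i)\<^sup>2 \<le> eps\<^sup>2 * (z \<bullet> v i)\<^sup>2" by (simp add: mult.commute)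
  qed
  also have "\<dots> = eps\<^sup>2 * (norm z)\<^sup>2"
    using rep_parseval[OF rep JK, of "\<lambda>i. z \<bullet> v i"] ze by (simp add: sum_distrib_left)
  also have "\<dots> \<le> eps\<^sup>2 * (1/eps)\<^sup>2"
    using z(2) by (intro mult_left_mono power_mono) auto
  also have "\<dots> = 1" using eps by (simp add: field_simps)
  finally have c1: "(\<Sum>i<DIM('a). (c i)\<^sup>2) \<le> 1" .
  have "(\<Sum>i<DIM('a). (c i * sg i) *\<^sub>R v i) = (\<Sum>i\<in>J. (z \<bullet> v i) *\<^sub>R v i)"
    unfolding c_def by (rule sum.mono_neutral_cong_right) (use JK in \<open>auto simp: sgnz\<close>)
  then have "z = (\<Sum>i<DIM('a). (c i * sg i) *\<^sub>R v i)" using ze by simp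
  with c1 have "\<exists>c. (\<Sum>i<DIM('a). (c i)\<^sup>2) \<le> 1 \<and> z = (\<Sum>i<DIM('a). (c i * sg i) *\<^sub>R v i)" by blast
  then show ?thesis using rep_mem[OF rep] by simp
qed

lemma rep_long_mem:
  assumes rep: "ellipsoid_rep (F::'a::euclidean_space set) sg v"
    and J: "J = {i. i < DIM('a) \<and> 1/eps < sg i}" and eps: "0 < eps"
    and z: "z \<in> span (v ` J)" "(\<Sum>i\<in>J. ((z \<bullet> v i) / sg i)\<^sup>2) \<le> 1"
  shows "z \<in> F"
proof -
  have JK: "J \<subseteq> {..<DIM('a)}" using J by auto
  have ze: "z = (\<Sum>i\<in>J. (z \<bullet> v i) *\<^sub>R v i)" by (rule rep_expand[OF rep JK z(1)])
  define c where "c i = (if i \<in> J then (z \<bullet> v i) / sg i else 0)" for i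
  have sgp: "0 < sg i" if "i \<in> J" for i
    using that J eps by (auto intro: less_trans[of 0 "1/eps"])
  have sgnz: "sg i \<noteq> 0" if "i \<in> J" for i using sgp[OF that] by simp
  have "(\<Sum>i<DIM('a). (c i)\<^sup>2) = (\<Sum>i\<in>J. ((z \<bullet> v i) / sg i)\<^sup>2)"
    unfolding c_def by (rule sum.mono_neutral_cong_right) (use JK in auto)
  with z(2) have c1: "(\<Sum>i<DIM('a). (c i)\<^sup>2) \<le> 1" by simp
  have "(\<Sum>i<DIM('a). (c i * sg i) *\<^sub>R v i) = (\<Sum>i\<in>J. (z \<bullet> v i) *\<^sub>R v i)"
    unfolding c_def by (rule sum.mono_neutral_cong_right) (use JK in \<open>auto simp: sgnz\<close>)
  then have "z = (\<Sum>i<DIM('a). (c i * sg i) *\<^sub>R v i)" using ze by simp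
  with c1 have "\<exists>c. (\<Sum>i<DIM('a). (c i)\<^sup>2) \<le> 1 \<and> z = (\<Sum>i<DIM('a). (c i * sg i) *\<^sub>R v i)" by blast
  then show ?thesis using rep_mem[OF rep] by simp
qed

lemma rep_orth:
  assumes rep: "ellipsoid_rep (F::'a::euclidean_space set) sg v" and I: "I \<subseteq> {..<DIM('a)}"
    and z: "z \<in> span (v ` I)" and j: "j < DIM('a)" "j \<notin> I"
  shows "z \<bullet> v j = 0"
proof -
  obtain s where s: "s = (\<Sum>i\<in>I. (z \<bullet> v i) *\<^sub>R v i)" by blast
  have zs: "z = s" using rep_expand[OF rep I z] s by simp
  have "s \<bullet> v j = 0" using rep_inner_sum[OF rep I j(1), of "\<lambda>i. z \<bullet> v i"] s j(2) by simp
  then show ?thesis using zs by simp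
qed

lemma rep_short:
  assumes rep: "ellipsoid_rep (F::'a::euclidean_space set) sg v"
    and dg: "\<forall>i<DIM('a). sg i \<notin> {eps..1/eps}"
    and i: "i < DIM('a)" and n1: "\<not> 1/eps < sg i"
  shows "0 \<le> sg i" "sg i < eps"
proof -
  show "0 \<le> sg i" using rep i unfolding ellipsoid_rep_def by blast
  have "sg i \<le> 1/eps" using n1 by (simp only: not_less)
  moreover have "sg i \<notin> {eps..1/eps}" using dg i by blast
  then have "\<not> (eps \<le> sg i \<and> sg i \<le> 1/eps)" by (metis atLeastAtMost_iff)
  ultimately show "sg i < eps" by linarith
qed

lemma half_sq: "\<bar>p * q\<bar> \<le> (p\<^sup>2 + q\<^sup>2) / 2" for p q :: real
proof -
  have "0 \<le> (\<bar>p\<bar> - \<bar>q\<bar>)\<^sup>2" by simp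
  then show ?thesis by (simp add: power2_eq_square abs_mult algebra_simps)
qed

lemma dim_img_test:
  fixes f :: "'a::euclidean_space \<Rightarrow> 'a"
  assumes "linear f" "inj f"
  shows "dim (f ` S) = dim S"
  using dim_image_eq[OF assms(1)] assms(2) by (simp add: inj_on_subset)

locale lsetup =
  fixes m :: nat and Xs :: "nat \<Rightarrow> 'a::euclidean_space set" and tau :: "real \<Rightarrow> 'a \<Rightarrow> 'a"
    and E :: "'a set" and eps a :: real and sg :: "nat \<Rightarrow> real" and v :: "nat \<Rightarrow> 'a" and J :: "nat set"
  assumes hds: "hilbert_dilation_system m Xs tau"
    and eps: "0 < eps" "eps < 1/2" and a0: "0 < a"
    and rep: "ellipsoid_rep (tau a ` E) sg v"
    and dg: "\<forall>i<DIM('a). sg i \<notin> {eps..1/eps}"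
    and Jdef: "J = {i. i < DIM('a) \<and> 1/eps < sg i}"
begin

definition "L = span (v ` J)"
definition "H = tau (1/a) ` L"

lemma JK: "J \<subseteq> {..<DIM('a)}" using Jdef by auto

lemma subspace_L: "subspace L" unfolding L_def by simp

lemma subspace_H: "subspace H"
  unfolding H_def using subspace_L hds_tau_linear[OF hds, of "1/a"] a0
  by (simp add: linear_subspace_image)

lemma dimL: "dim L = card J" unfolding L_def using rep_indep[OF rep JK] by simp

lemma tauE: "0 < delta \<Longrightarrow> tau delta x = tau (delta/a) (tau a x)"
  using hds_tau_comp[OF hds, of "delta/a" a x] a0 by simp

lemma tauH: "0 < delta \<Longrightarrow> tau delta (tau (1/a) z) = tau (delta/a) z"
  using hds_tau_comp[OF hds, of delta "1/a" z] a0 by simp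

lemma tau_a_H: "tau a (tau (1/a) z) = z"
  using tauH[of a z] a0 hds_tau_1[OF hds] by simp

lemma partA:
  assumes "a \<le> delta"
  shows "tau delta ` E \<subseteq> {x + y | x y. x \<in> tau delta ` H \<and> y \<in> cball 0 eps}"
proof
  fix x assume "x \<in> tau delta ` E"
  then obtain e where e: "e \<in> E" "x = tau delta e" by blast
  have d0: "0 < delta" using assms a0 by linarith
  have "tau a e \<in> tau a ` E" using e(1) by (rule imageI)
  then obtain c w where cw: "(\<Sum>i<DIM('a). (c i)\<^sup>2) \<le> 1" "tau a e = (\<Sum>i\<in>J. (c i * sg i) *\<^sub>R v i) + w" "norm w \<le> eps"
    using rep_split[OF rep dg Jdef _ eps(1), of "tau a e"] by blast
  define u where "u = (\<Sum>i\<in>J. (c i * sg i) *\<^sub>R v i)"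
  have uL: "u \<in> L" unfolding L_def u_def
    by (intro span_sum span_scale span_base) auto
  have lin: "linear (tau (delta/a))" using hds_tau_linear[OF hds] d0 a0 by simp
  have x1: "x = tau (delta/a) (tau a e)" using e(2) tauE[OF d0, of e] by simp
  have x2: "x = tau (delta/a) u + tau (delta/a) w"
    unfolding x1 cw(2) u_def[symmetric] by (rule linear_add[OF lin])
  have m1: "tau (delta/a) u \<in> tau delta ` H"
  proof -
    have "tau (1/a) u \<in> H" unfolding H_def using uL by (rule imageI)
    then have "tau delta (tau (1/a) u) \<in> tau delta ` H" by (rule imageI)
    then show ?thesis using tauH[OF d0, of u] by simp
  qed
  have "1 \<le> delta / a" using assms a0 by simp
  then have "norm (tau (delta/a) w) \<le> norm w" by (rule hds_tau_norm_le1[OF hds])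
  then have m2: "tau (delta/a) w \<in> cball 0 eps" using cw(3) by simp
  show "x \<in> {x + y | x y. x \<in> tau delta ` H \<and> y \<in> cball 0 eps}"
    using x2 m1 m2 by blast
qed

lemma Qa: "\<forall>h\<in>H. norm (tau a h) \<le> 1/(2*eps) \<longrightarrow> h \<in> E"
proof (intro ballI impI)
  fix h assume h: "h \<in> H" "norm (tau a h) \<le> 1/(2*eps)"
  then obtain z where z: "z \<in> L" "h = tau (1/a) z" unfolding H_def by blast
  have tz: "tau a h = z" using z(2) tau_a_H by simp
  have "1/(2*eps) \<le> 1/eps" using eps by (simp add: field_simps)
  then have "norm z \<le> 1/eps" using h(2) tz by simp
  then have "z \<in> tau a ` E" using rep_long_ball[OF rep Jdef eps(1)] z(1) unfolding L_def by blast
  then obtain e where "e \<in> E" "z = tau a e" by blast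
  then have "tau a h = tau a e" using tz by simp
  then have "h = e" using hds_tau_inj[OF hds a0] by blast
  then show "h \<in> E" using \<open>e \<in> E\<close> by simp
qed

lemma C1:
  assumes ad: "a \<le> delta"
    and rep': "ellipsoid_rep (tau delta ` E) sg' v'"
    and dg': "\<forall>i<DIM('a). sg' i \<notin> {eps..1/eps}"
    and J': "J' = {i. i < DIM('a) \<and> 1/eps < sg' i}"
    and hyp: "\<forall>h\<in>H. norm (tau delta h) \<le> 2*eps \<longrightarrow> h \<in> E"
  shows "card J \<le> card J'"
proof (rule ccontr)
  assume nc: "\<not> card J \<le> card J'"
  have d0: "0 < delta" using ad a0 by linarith
  have JK': "J' \<subseteq> {..<DIM('a)}" using J' by auto
  define K' where "K' = {..<DIM('a)} - J'"
  have KK: "K' \<subseteq> {..<DIM('a)}" unfolding K'_def by blast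
  define U where "U = span (v' ` K')"
  have dimU: "dim U = card K'" unfolding U_def using rep_indep[OF rep' KK] by simp
  have cK: "card K' = DIM('a) - card J'" unfolding K'_def
    using card_Diff_subset[OF finite_subset[OF JK' finite_lessThan] JK'] by simp
  have cJ'le: "card J' \<le> DIM('a)" using card_mono[OF finite_lessThan JK'] by simp
  have linS: "linear (tau (delta/a))" using hds_tau_linear[OF hds] d0 a0 by simp
  have da0: "0 < delta/a" using d0 a0 by simp
  have injS: "inj (tau (delta/a))" by (rule injI) (rule hds_tau_inj[OF hds da0])
  define G where "G = tau delta ` H"
  have GL: "G = tau (delta/a) ` L"
    unfolding G_def H_def image_image using tauH[OF d0] by simp
  have subG: "subspace G" unfolding GL using linS subspace_L by (rule linear_subspace_image)
  have dimG: "dim G = card J" unfolding GL using dim_img_test[OF linS injS] dimL by simp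
  have "dim U + dim G > DIM('a)" using dimU dimG cK nc cJ'le by linarith
  then obtain x where x: "x \<in> U" "x \<in> G" "x \<noteq> 0"
    using dim_inter_nonzero[OF _ subG, of U] unfolding U_def by auto
  from x(2) obtain h where h: "h \<in> H" "x = tau delta h" unfolding G_def by blast
  define t where "t = 2*eps / norm x"
  have t0: "0 < t" unfolding t_def using x(3) eps by simp
  define y where "y = t *\<^sub>R x"
  have ny: "norm y = 2*eps" unfolding y_def t_def using x(3) eps by simp
  have linD: "linear (tau delta)" using hds_tau_linear[OF hds] d0 by simp
  have yh: "y = tau delta (t *\<^sub>R h)" unfolding y_def h(2) using linear_scale[OF linD] by simp
  have thH: "t *\<^sub>R h \<in> H" using subspace_H h(1) by (rule subspace_scale)
  have "t *\<^sub>R h \<in> E" using hyp thH yh ny by simp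
  then have "y \<in> tau delta ` E" using yh by blast
  then obtain c where c: "(\<Sum>i<DIM('a). (c i)\<^sup>2) \<le> 1" "y = (\<Sum>i<DIM('a). (c i * sg' i) *\<^sub>R v' i)"
    using rep_mem[OF rep'] by blast
  have yU: "y \<in> U" unfolding y_def U_def using x(1) unfolding U_def by (simp add: span_scale)
  have cz: "c j * sg' j = 0" if j: "j \<in> J'" for j
  proof -
    have jd: "j < DIM('a)" using j JK' by blast
    have "y \<bullet> v' j = c j * sg' j" using rep_inner_sum[OF rep' _ jd, of "{..<DIM('a)}"] c(2) jd by simp
    moreover have "y \<bullet> v' j = 0"
      using rep_orth[OF rep' KK _ jd] yU j unfolding U_def K'_def by blast
    ultimately show ?thesis by simp
  qed
  have "(norm y)\<^sup>2 = (\<Sum>i<DIM('a). (c i * sg' i)\<^sup>2)"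
    using rep_parseval[OF rep', of "{..<DIM('a)}" "\<lambda>i. c i * sg' i"] c(2) by simp
  also have "\<dots> \<le> (\<Sum>i<DIM('a). eps\<^sup>2 * (c i)\<^sup>2)"
  proof (rule sum_mono)
    fix i assume "i \<in> {..<DIM('a)}"
    then have i: "i < DIM('a)" by simp
    show "(c i * sg' i)\<^sup>2 \<le> eps\<^sup>2 * (c i)\<^sup>2"
    proof (cases "i \<in> J'")
      case True
      have z0: "(c i * sg' i)\<^sup>2 = 0" using cz[OF True] by simp
      have "0 \<le> eps\<^sup>2 * (c i)\<^sup>2" by simp
      with z0 show ?thesis by linarith
    next
      case False
      then have "\<not> 1/eps < sg' i" using J' i by simp
      then have "0 \<le> sg' i" "sg' i < eps" using rep_short[OF rep' dg' i] by simp_all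
      then have "(sg' i)\<^sup>2 \<le> eps\<^sup>2" by (intro power_mono) simp_all
      then have "(c i)\<^sup>2 * (sg' i)\<^sup>2 \<le> (c i)\<^sup>2 * eps\<^sup>2" by (rule mult_left_mono) simp
      then show ?thesis by (simp add: power_mult_distrib mult.commute)
    qed
  qed
  also have "\<dots> = eps\<^sup>2 * (\<Sum>i<DIM('a). (c i)\<^sup>2)" by (rule sum_distrib_left[symmetric])
  also have "\<dots> \<le> eps\<^sup>2 * 1" by (rule mult_left_mono) (use c(1) in simp_all)
  finally have "(2*eps)\<^sup>2 \<le> eps\<^sup>2" using ny by simp
  then show False using eps by (simp add: power2_eq_square)
qed

lemma C3:
  assumes ad: "a \<le> delta"
    and rep': "ellipsoid_rep (tau delta ` E) sg' v'"
    and dg': "\<forall>i<DIM('a). sg' i \<notin> {eps..1/eps}"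
    and J': "J' = {i. i < DIM('a) \<and> 1/eps < sg' i}"
    and hyp: "\<forall>h\<in>H. norm (tau delta h) \<le> 2*eps \<longrightarrow> h \<in> E"
    and h: "h \<in> H" "norm (tau delta h) \<le> 1/(2*eps)"
  shows "h \<in> E"
proof (rule ccontr)
  assume hE: "h \<notin> E"
  have cJ: "card J \<le> card J'" by (rule C1[OF ad rep' dg' J' hyp])
  have d0: "0 < delta" using ad a0 by linarith
  have da0: "0 < delta/a" using d0 a0 by simp
  have JK': "J' \<subseteq> {..<DIM('a)}" using J' by auto
  have linS: "linear (tau (delta/a))" using hds_tau_linear[OF hds da0] .
  from h(1) obtain z where z: "z \<in> L" "h = tau (1/a) z" unfolding H_def by blast
  have taz: "tau a h = z" using z(2) tau_a_H by simp
  have sgp: "0 < sg i" if "i \<in> J" for i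
    using that Jdef eps by (auto intro: less_trans[of 0 "1/eps"])
  define al where "al i = z \<bullet> v i" for i
  define Phi where "Phi = (\<Sum>i\<in>J. (al i / sg i)\<^sup>2)"
  have Phi1: "1 < Phi"
  proof (rule ccontr)
    assume "\<not> 1 < Phi"
    then have "(\<Sum>i\<in>J. ((z \<bullet> v i) / sg i)\<^sup>2) \<le> 1" unfolding Phi_def al_def by simp
    then have "z \<in> tau a ` E" using rep_long_mem[OF rep Jdef eps(1)] z(1) unfolding L_def by blast
    then obtain e where e: "e \<in> E" "z = tau a e" by blast
    then have "tau a h = tau a e" using taz by simp
    then have "h = e" by (rule hds_tau_inj[OF hds a0])
    then show False using hE e(1) by simp
  qed
  define phi where "phi y = (\<Sum>i\<in>J. (al i / (sg i)\<^sup>2) * (y \<bullet> v i))" for y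
  have phi_add: "phi (x + y) = phi x + phi y" for x y
    unfolding phi_def by (simp add: inner_add_left distrib_left sum.distrib)
  have phi_scale: "phi (r *\<^sub>R x) = r * phi x" for r x
    unfolding phi_def by (simp add: sum_distrib_left algebra_simps)
  have phi_diff: "phi (x - y) = phi x - phi y" for x y
    unfolding phi_def by (simp add: inner_diff_left right_diff_distrib sum_subtractf)
  have phiz: "phi z = Phi"
    unfolding phi_def Phi_def al_def
    by (rule sum.cong) (simp_all add: power2_eq_square)
  define W0 where "W0 = {y \<in> L. phi y = 0}"
  have subW0: "subspace W0"
    unfolding subspace_def W0_def
  proof (intro conjI ballI allI)
    show "0 \<in> {y \<in> L. phi y = 0}" using subspace_L by (simp add: subspace_0 phi_def)
  next
    fix x y assume "x \<in> {y \<in> L. phi y = 0}" "y \<in> {y \<in> L. phi y = 0}"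
    then show "x + y \<in> {y \<in> L. phi y = 0}" using subspace_L phi_add by (simp add: subspace_add)
  next
    fix r x assume "x \<in> {y \<in> L. phi y = 0}"
    then show "r *\<^sub>R x \<in> {y \<in> L. phi y = 0}" using subspace_L phi_scale by (simp add: subspace_scale)
  qed
  have W0L: "W0 \<subset> L"
  proof
    show "W0 \<subseteq> L" unfolding W0_def by blast
    have "z \<notin> W0" unfolding W0_def using phiz Phi1 by simp
    then show "W0 \<noteq> L" using z(1) by blast
  qed
  have dW0: "dim W0 < card J"
  proof -
    have e1: "span W0 = W0" using subW0 by (rule span_eq_iff[THEN iffD2])
    have e2: "span L = L" using subspace_L by (rule span_eq_iff[THEN iffD2])
    have "span W0 \<subset> span L" unfolding e1 e2 by (rule W0L)
    then have "dim W0 < dim L" by (rule dim_psubset)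
    then show ?thesis using dimL by simp
  qed
  define W where "W = tau (delta/a) ` W0"
  have subW: "subspace W" unfolding W_def using linS subW0 by (rule linear_subspace_image)
  have dW: "dim W \<le> dim W0" unfolding W_def by (rule dim_image_le[OF linS])
  define V' where "V' = span (v' ` J')"
  have dV': "dim V' = card J'" unfolding V'_def using rep_indep[OF rep' JK'] by simp
  have dWc: "dim W + dim (orthogonal_comp W) = DIM('a)" by (rule dim_orth_comp[OF subW])
  have "dim V' + dim (orthogonal_comp W) > DIM('a)" using dV' dWc dW dW0 cJ by linarith
  then obtain x0 where x0: "x0 \<in> V'" "x0 \<in> orthogonal_comp W" "x0 \<noteq> 0"
    using dim_inter_nonzero[OF _ subspace_orthogonal_comp, of V' W] unfolding V'_def by auto
  define x where "x = ((1/eps) / norm x0) *\<^sub>R x0"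
  have nx: "norm x = 1/eps" unfolding x_def using x0(3) eps by simp
  have xV: "x \<in> V'" unfolding x_def V'_def using x0(1) unfolding V'_def by (simp add: span_scale)
  have xW: "x \<in> orthogonal_comp W" unfolding x_def
    using x0(2) subspace_orthogonal_comp by (rule subspace_scale[rotated])
  have "x \<in> tau delta ` E"
    using rep_long_ball[OF rep' J' eps(1)] xV nx unfolding V'_def by simp
  then obtain e where e: "e \<in> E" "x = tau delta e" by blast
  have "tau a e \<in> tau a ` E" using e(1) by (rule imageI)
  then obtain c w where cw: "(\<Sum>i<DIM('a). (c i)\<^sup>2) \<le> 1" "tau a e = (\<Sum>i\<in>J. (c i * sg i) *\<^sub>R v i) + w" "norm w \<le> eps"
    using rep_split[OF rep dg Jdef _ eps(1), of "tau a e"] by blast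
  define u where "u = (\<Sum>i\<in>J. (c i * sg i) *\<^sub>R v i)"
  have uL: "u \<in> L" unfolding L_def u_def
    by (intro span_sum span_scale span_base) auto
  have x1: "x = tau (delta/a) (tau a e)" using e(2) tauE[OF d0, of e] by simp
  have x2: "x = tau (delta/a) u + tau (delta/a) w"
    unfolding x1 cw(2) u_def[symmetric] by (rule linear_add[OF linS])
  have uv: "u \<bullet> v i = c i * sg i" if "i \<in> J" for i
    using rep_inner_sum[OF rep JK, of i "\<lambda>i. c i * sg i"] that JK unfolding u_def by auto
  have phiu: "phi u = (\<Sum>i\<in>J. (al i / sg i) * c i)"
    unfolding phi_def
  proof (rule sum.cong)
    fix i assume i: "i \<in> J"
    have "sg i \<noteq> 0" using sgp[OF i] by simp
    then show "al i / (sg i)\<^sup>2 * (u \<bullet> v i) = al i / sg i * c i"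
      using uv[OF i] by (simp add: power2_eq_square)
  qed simp
  have cJ1: "(\<Sum>i\<in>J. (c i)\<^sup>2) \<le> 1"
  proof -
    have "(\<Sum>i\<in>J. (c i)\<^sup>2) \<le> (\<Sum>i<DIM('a). (c i)\<^sup>2)" by (rule sum_mono2) (use JK in simp_all)
    then show ?thesis using cw(1) by linarith
  qed
  have phiu_le: "\<bar>phi u\<bar> \<le> Phi"
  proof -
    have "\<bar>phi u\<bar> \<le> (\<Sum>i\<in>J. \<bar>(al i / sg i) * c i\<bar>)" unfolding phiu by (rule sum_abs)
    also have "\<dots> \<le> (\<Sum>i\<in>J. ((al i / sg i)\<^sup>2 + (c i)\<^sup>2) / 2)" by (rule sum_mono) (rule half_sq)
    also have "\<dots> = (Phi + (\<Sum>i\<in>J. (c i)\<^sup>2)) / 2"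
      unfolding Phi_def by (simp only: sum.distrib[symmetric] sum_divide_distrib)
    also have "\<dots> \<le> Phi" using cJ1 Phi1 by (simp add: field_simps)
    finally show ?thesis .
  qed
  define beta where "beta = phi u / Phi"
  have P0: "0 < Phi" using Phi1 by linarith
  have beta1: "\<bar>beta\<bar> \<le> 1"
  proof -
    have "\<bar>beta\<bar> = \<bar>phi u\<bar> / \<bar>Phi\<bar>" unfolding beta_def by (rule abs_divide)
    also have "\<dots> = \<bar>phi u\<bar> / Phi" using P0 by simp
    also have "\<dots> \<le> Phi / Phi" by (rule divide_right_mono) (use phiu_le P0 in simp_all)
    also have "\<dots> = 1" using P0 by simp
    finally show ?thesis .
  qed
  have "u - beta *\<^sub>R z \<in> W0"
  proof -
    have "u - beta *\<^sub>R z \<in> L" using subspace_L uL z(1) by (simp add: subspace_diff subspace_scale)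
    moreover have "phi (u - beta *\<^sub>R z) = 0" unfolding phi_diff phi_scale phiz beta_def using Phi1 by simp
    ultimately show ?thesis unfolding W0_def by blast
  qed
  then have "tau (delta/a) (u - beta *\<^sub>R z) \<in> W" unfolding W_def by (rule imageI)
  then have orth: "tau (delta/a) (u - beta *\<^sub>R z) \<bullet> x = 0" using xW
    unfolding orthogonal_comp_def orthogonal_def by blast
  have tz: "tau (delta/a) z = tau delta h" using tauH[OF d0, of z] z(2) by simp
  have "tau (delta/a) (u - beta *\<^sub>R z) = tau (delta/a) u - beta *\<^sub>R tau delta h"
    using linear_diff[OF linS] linear_scale[OF linS] tz by simp
  with orth have "(tau (delta/a) u - beta *\<^sub>R tau delta h) \<bullet> x = 0" by simp
  then have "x \<bullet> tau (delta/a) u - beta * (x \<bullet> tau delta h) = 0"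
    by (simp add: inner_diff_left inner_diff_right inner_commute)
  then have xu: "x \<bullet> tau (delta/a) u = beta * (x \<bullet> tau delta h)" by simp
  have nw: "norm (tau (delta/a) w) \<le> eps"
  proof -
    have "1 \<le> delta / a" using ad a0 by simp
    then have "norm (tau (delta/a) w) \<le> norm w" by (rule hds_tau_norm_le1[OF hds])
    then show ?thesis using cw(3) by linarith
  qed
  have "(norm x)\<^sup>2 = x \<bullet> x" by (simp add: power2_norm_eq_inner)
  also have "\<dots> = x \<bullet> tau (delta/a) u + x \<bullet> tau (delta/a) w"
    by (subst (2) x2) (simp add: inner_add_right)
  also have "\<dots> = beta * (x \<bullet> tau delta h) + x \<bullet> tau (delta/a) w" using xu by simp
  also have "\<dots> \<le> \<bar>beta\<bar> * (norm x * norm (tau delta h)) + norm x * norm (tau (delta/a) w)"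
  proof -
    have cs: "\<bar>x \<bullet> tau delta h\<bar> \<le> norm x * norm (tau delta h)" by (rule Cauchy_Schwarz_ineq2)
    have "beta * (x \<bullet> tau delta h) \<le> \<bar>beta * (x \<bullet> tau delta h)\<bar>" by (rule abs_ge_self)
    also have "\<dots> = \<bar>beta\<bar> * \<bar>x \<bullet> tau delta h\<bar>" by (rule abs_mult)
    also have "\<dots> \<le> \<bar>beta\<bar> * (norm x * norm (tau delta h))" using cs by (rule mult_left_mono) simp
    finally have "beta * (x \<bullet> tau delta h) \<le> \<bar>beta\<bar> * (norm x * norm (tau delta h))" .
    moreover have "x \<bullet> tau (delta/a) w \<le> norm x * norm (tau (delta/a) w)" by (rule norm_cauchy_schwarz)
    ultimately show ?thesis by linarith
  qed
  also have "\<dots> \<le> 1 * (norm x * (1/(2*eps))) + norm x * eps"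
  proof -
    have "\<bar>beta\<bar> * (norm x * norm (tau delta h)) \<le> 1 * (norm x * (1/(2*eps)))"
      using beta1 h(2) by (intro mult_mono) (simp_all add: mult_left_mono)
    moreover have "norm x * norm (tau (delta/a) w) \<le> norm x * eps"
      using nw by (simp add: mult_left_mono)
    ultimately show ?thesis by linarith
  qed
  finally have ineq: "(norm x)\<^sup>2 \<le> norm x * (1/(2*eps) + eps)" by (simp add: algebra_simps)
  have "norm x \<le> 1/(2*eps) + eps"
  proof -
    have "norm x * norm x \<le> norm x * (1/(2*eps) + eps)" using ineq by (simp add: power2_eq_square)
    moreover have "0 < norm x" using nx eps by simp
    ultimately show ?thesis by simp
  qed
  then have "1/eps \<le> 1/(2*eps) + eps" using nx by simp
  then have "2 * eps * (1/eps) \<le> 2 * eps * (1/(2*eps) + eps)" using eps by (intro mult_left_mono) simp_all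
  then have "2 \<le> 1 + 2 * eps * eps" using eps by (simp add: algebra_simps)
  moreover have "eps * eps < 1/2 * (1/2)" using eps by (intro mult_strict_mono) simp_all
  ultimately show False by linarith
qed

lemma step:
  assumes ad: "a \<le> delta" and degd: "eps_degenerate eps (tau delta ` E)"
    and hyp: "\<forall>h\<in>H. norm (tau delta h) \<le> 2*eps \<longrightarrow> h \<in> E"
  shows "\<forall>h\<in>H. norm (tau delta h) \<le> 1/(2*eps) \<longrightarrow> h \<in> E"
proof -
  obtain sg' v' where rep': "ellipsoid_rep (tau delta ` E) sg' v'"
    and dg': "\<forall>i<DIM('a). sg' i \<notin> {eps..1/eps}"
    using degd unfolding eps_degenerate_def by blast
  show ?thesis
    using C3[OF ad rep' dg' refl hyp] by blast
qed

lemma m_pos: "0 < m"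
proof (rule ccontr)
  assume "\<not> 0 < m"
  then have "m = 0" by simp
  then have "span {} = (UNIV :: 'a set)" using hds unfolding hilbert_dilation_system_def by simp
  then have "(UNIV :: 'a set) = {0}" by simp
  moreover obtain b :: 'a where "b \<in> Basis" using nonempty_Basis by blast
  then have "b \<noteq> 0" by (auto simp: nonzero_Basis)
  ultimately show False by blast
qed

lemma chain:
  assumes deg: "\<forall>delta\<in>{a..b}. eps_degenerate eps (tau delta ` E)"
  shows "\<forall>delta\<in>{a..b}. \<forall>h\<in>H. norm (tau delta h) \<le> 1/(2*eps) \<longrightarrow> h \<in> E"
proof -
  define Q where "Q delta \<longleftrightarrow> (\<forall>h\<in>H. norm (tau delta h) \<le> 1/(2*eps) \<longrightarrow> h \<in> E)" for delta
  define K where "K = 1 / (4 * eps\<^sup>2)"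
  have K1: "1 < K"
  proof -
    have "eps\<^sup>2 < (1/2)\<^sup>2" using eps by (intro power_strict_mono) simp_all
    then have "4 * eps\<^sup>2 < 1" by (simp add: power2_eq_square)
    moreover have "0 < 4 * eps\<^sup>2" using eps by simp
    ultimately show ?thesis unfolding K_def by (simp add: field_simps)
  qed
  define rho where "rho = root m K"
  have mp: "0 < m" by (rule m_pos)
  have rhoK: "rho ^ m = K" unfolding rho_def using mp K1 by simp
  have rho1: "1 < rho" unfolding rho_def using mp K1 by simp
  have K2: "K * (2 * eps) = 1/(2*eps)" unfolding K_def using eps by (simp add: field_simps power2_eq_square)
  have P: "\<forall>delta. a \<le> delta \<and> delta \<le> b \<and> delta \<le> a * rho ^ n \<longrightarrow> Q delta" for n
  proof (induction n)
    case 0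
    show ?case
    proof (intro allI impI)
      fix delta assume "a \<le> delta \<and> delta \<le> b \<and> delta \<le> a * rho ^ 0"
      then have "delta = a" by simp
      then show "Q delta" unfolding Q_def using Qa by simp
    qed
  next
    case (Suc n)
    show ?case
    proof (intro allI impI)
      fix delta assume d: "a \<le> delta \<and> delta \<le> b \<and> delta \<le> a * rho ^ Suc n"
      show "Q delta"
      proof (cases "delta \<le> a * rho ^ n")
        case True
        then show ?thesis using Suc.IH d by blast
      next
        case False
        define d0 where "d0 = a * rho ^ n"
        have d0a: "a \<le> d0" unfolding d0_def using a0 rho1 by (simp add: one_le_power)
        have d0d: "d0 < delta" using False unfolding d0_def by simp
        have Qd0: "Q d0" using Suc.IH d0a d0d d by (simp add: d0_def)
        have dpos: "0 < delta" using d a0 by linarith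
        have d0pos: "0 < d0" using d0a a0 by linarith
        have drho: "delta \<le> rho * d0" using d unfolding d0_def by (simp add: mult.commute mult.left_commute)
        have "\<forall>h\<in>H. norm (tau delta h) \<le> 2*eps \<longrightarrow> h \<in> E"
        proof (intro ballI impI)
          fix h assume h: "h \<in> H" "norm (tau delta h) \<le> 2*eps"
          define mu where "mu = d0 / delta"
          have mu0: "0 < mu" unfolding mu_def using d0pos dpos by simp
          have mu1: "mu \<le> 1" unfolding mu_def using d0d dpos by simp
          have "tau d0 h = tau mu (tau delta h)"
            using hds_tau_comp[OF hds mu0 dpos, of h] dpos unfolding mu_def by simp
          then have "norm (tau d0 h) \<le> (inverse mu) ^ m * norm (tau delta h)"
            using hds_tau_norm_ge1[OF hds mu0 mu1] by simp
          also have "\<dots> \<le> rho ^ m * (2 * eps)"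
          proof (rule mult_mono)
            have "inverse mu = delta / d0" unfolding mu_def by simp
            also have "\<dots> \<le> rho" using drho d0pos by (simp add: divide_le_eq)
            finally have "inverse mu \<le> rho" .
            then show "(inverse mu) ^ m \<le> rho ^ m" using mu0 by (intro power_mono) simp_all
          qed (use h(2) rho1 in simp_all)
          also have "\<dots> = 1/(2*eps)" using rhoK K2 by simp
          finally have "norm (tau d0 h) \<le> 1/(2*eps)" .
          then show "h \<in> E" using Qd0 h(1) unfolding Q_def by blast
        qed
        then show ?thesis unfolding Q_def using step[of delta] d deg by simp
      qed
    qed
  qed
  show ?thesis
  proof (rule ballI)
    fix delta assume d: "delta \<in> {a..b}"
    obtain n where n: "delta / a < rho ^ n" using real_arch_pow[OF rho1] by blast
    then have "delta \<le> a * rho ^ n" using a0 by (simp add: divide_less_eq mult.commute)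
    then have "Q delta" using P[of n] d by simp
    then show "\<forall>h\<in>H. norm (tau delta h) \<le> 1/(2*eps) \<longrightarrow> h \<in> E" unfolding Q_def .
  qed
qed

end


theorem lemma4p8:
  fixes m :: nat and Xs :: "nat \<Rightarrow> 'a::euclidean_space set"
    and tau :: "real \<Rightarrow> 'a \<Rightarrow> 'a" and E :: "'a set"
    and eps a b :: real
  assumes "hilbert_dilation_system m Xs tau"
    and "ellipsoid E"
    and "0 < eps" and "eps < 1/2"
    and "0 < a" and "a \<le> b"
    and "\<forall>delta\<in>{a..b}. eps_degenerate eps (tau delta ` E)"
  shows "\<exists>H. subspace H \<and>
           (\<forall>delta\<in>{a..b}.
              tau delta ` E \<subseteq> {x + y | x y. x \<in> tau delta ` H \<and> y \<in> cball 0 eps} \<and>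
              tau delta ` H \<inter> cball 0 (1 / (2 * eps)) \<subseteq> tau delta ` E)"
proof -
  have aab: "a \<in> {a..b}" using assms(6) by simp
  obtain sg v where rep: "ellipsoid_rep (tau a ` E) sg v" and dg: "\<forall>i<DIM('a). sg i \<notin> {eps..1/eps}"
    using assms(7) aab unfolding eps_degenerate_def by blast
  interpret S: lsetup m Xs tau E eps a sg v "{i. i < DIM('a) \<and> 1/eps < sg i}"
  proof
    show "hilbert_dilation_system m Xs tau" by (rule assms(1))
    show "0 < eps" by (rule assms(3))
    show "eps < 1/2" by (rule assms(4))
    show "0 < a" by (rule assms(5))
    show "ellipsoid_rep (tau a ` E) sg v" by (rule rep)
    show "\<forall>i<DIM('a). sg i \<notin> {eps..1/eps}" by (rule dg)
  qed (rule refl)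
  have B: "\<forall>delta\<in>{a..b}. \<forall>h\<in>S.H. norm (tau delta h) \<le> 1/(2*eps) \<longrightarrow> h \<in> E"
    by (rule S.chain[OF assms(7)])
  have "\<forall>delta\<in>{a..b}.
              tau delta ` E \<subseteq> {x + y | x y. x \<in> tau delta ` S.H \<and> y \<in> cball 0 eps} \<and>
              tau delta ` S.H \<inter> cball 0 (1 / (2 * eps)) \<subseteq> tau delta ` E"
  proof (rule ballI, rule conjI)
    fix delta assume d: "delta \<in> {a..b}"
    then have ad: "a \<le> delta" by simp
    show "tau delta ` E \<subseteq> {x + y | x y. x \<in> tau delta ` S.H \<and> y \<in> cball 0 eps}"
      by (rule S.partA[OF ad])
    show "tau delta ` S.H \<inter> cball 0 (1 / (2 * eps)) \<subseteq> tau delta ` E"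
    proof
      fix x assume x: "x \<in> tau delta ` S.H \<inter> cball 0 (1 / (2 * eps))"
      then obtain h where h: "h \<in> S.H" "x = tau delta h" by blast
      have "norm (tau delta h) \<le> 1/(2*eps)" using x h(2) by simp
      then have "h \<in> E" using B d h(1) by blast
      then show "x \<in> tau delta ` E" using h(2) by blast
    qed
  qed
  then show ?thesis using S.subspace_H by blast
qed

end
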